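(* Let $G_1,G_2$ be finite, undirected, simple graphs with disjoint vertex sets, $V(G_1)=\{v_1,\dots,v_{n_1}\}$. Then $\alpha(G_1\,\mathrm{NS}\,G_2)\ge n_1+\alpha(G_2)$, $\alpha(G_1\,\mathrm{NNS}\,G_2)\ge n_1+\alpha(G_2)$, $\omega(G_1\,\mathrm{NS}\,G_2)=\omega(G_1)+\omega(G_2)=\omega(G_1\,\mathrm{NNS}\,G_2)$, $\chi(G_1\,\mathrm{NS}\,G_2)=\chi(G_1)+\chi(G_2)=\chi(G_1\,\mathrm{NNS}\,G_2)$, $\vartheta(G_1\,\mathrm{NS}\,G_2)\ge n_1+\vartheta(G_2)$, $\vartheta(G_1\,\mathrm{NNS}\,G_2)\ge n_1+\vartheta(G_2)$. Moreover: (i) if there is a permutation $\pi$ of $\{1,\dots,n_1\}$ with $\{v_i,v_{\pi(i)}\}\in E(G_1)$ for all $i$, then $\vartheta(G_1\,\mathrm{NS}\,G_2)=n_1+\vartheta(G_2)$; (ii) if there is a permutation $\pi$ of $\{1,\dots,n_1\}$ with $\pi(i)\ne i$ and $\{v_i,v_{\pi(i)}\}\notin E(G_1)$ for all $i$, then $\vartheta(G_1\,\mathrm{NNS}\,G_2)=n_1+\vartheta(G_2)$; (iii) if the condition in (i) holds and $\alpha(G_2)=\vartheta(G_2)$, then $\alpha(G_1\,\mathrm{NS}\,G_2)=n_1+\alpha(G_2)$; (iv) if the condition in (ii) holds and $\alpha(G_2)=\vartheta(G_2)$, then $\alpha(G_1\,\mathrm{NNS}\,G_2)=n_1+\alpha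(G_2)$.
   Context: The join $G_1\vee G_2$ is the disjoint union of $G_1,G_2$ together with all edges joining a vertex of $G_1$ to a vertex of $G_2$. The neighbors splitting (NS) join $G_1\,\mathrm{NS}\,G_2$ is obtained from $G_1\vee G_2$ by adding new vertices $v'_1,\dots,v'_{n_1}$ and joining $v'_i$ to $v_j$ iff $\{v_i,v_j\}\in E(G_1)$ (no other new edges). The nonneighbors splitting (NNS) join $G_1\,\mathrm{NNS}\,G_2$ is obtained from $G_1\vee G_2$ by adding new vertices $v'_1,\dots,v'_{n_1}$ and joining $v'_i$ to $v_j$, $i\ne j$, iff $\{v_i,v_j\}\notin E(G_1)$ (no other new edges). $\alpha,\omega,\chi$ are the independence, clique and chromatic numbers; $\vartheta(G)$ is the Lovász theta function: the maximum of $\mathrm{Tr}(BJ)$ over positive semidefinite $B$ indexed by $V(G)$ with $\mathrm{Tr}B=1$ and $B_{i,j}=0$ for $\{i,j\}\in E(G)$, $J$ the all-ones matrix. *)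

theory Defs
  imports Complex_Main
begin

type_synonym 'a graph = "'a set \<times> 'a set set"

definition verts :: "'a graph \<Rightarrow> 'a set" where "verts G = fst G"
definition edges :: "'a graph \<Rightarrow> 'a set set" where "edges G = snd G"

definition finite_simple_graph :: "'a graph \<Rightarrow> bool" where
  "finite_simple_graph G \<longleftrightarrow> finite (verts G) \<and>
     (\<forall>e\<in>edges G. \<exists>x y. x \<in> verts G \<and> y \<in> verts G \<and> x \<noteq> y \<and> e = {x, y})"

definition independent_set :: "'a graph \<Rightarrow> 'a set \<Rightarrow> bool" where
  "independent_set G S \<longleftrightarrow> S \<subseteq> verts G \<and> (\<forall>x\<in>S. \<forall>y\<in>S. {x, y} \<notin> edges G)"

definition clique :: "'a graph \<Rightarrow> 'a set \<Rightarrow> bool" where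
  "clique G S \<longleftrightarrow> S \<subseteq> verts G \<and> (\<forall>x\<in>S. \<forall>y\<in>S. x \<noteq> y \<longrightarrow> {x, y} \<in> edges G)"

definition alpha :: "'a graph \<Rightarrow> nat" where
  "alpha G = Max {card S | S. independent_set G S}"

definition omega :: "'a graph \<Rightarrow> nat" where
  "omega G = Max {card S | S. clique G S}"

definition proper_coloring :: "'a graph \<Rightarrow> nat \<Rightarrow> ('a \<Rightarrow> nat) \<Rightarrow> bool" where
  "proper_coloring G k f \<longleftrightarrow> (\<forall>v\<in>verts G. f v < k) \<and>
     (\<forall>x\<in>verts G. \<forall>y\<in>verts G. {x, y} \<in> edges G \<longrightarrow> f x \<noteq> f y)"

definition chi :: "'a graph \<Rightarrow> nat" where
  "chi G = (LEAST k. \<exists>f. proper_coloring G k f)"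

text \<open>Feasible matrices for the Lovasz theta function: real matrices B indexed by V(G)
  (represented as functions, only entries on V(G) matter), symmetric positive
  semidefinite, trace 1, and B(i,j) = 0 whenever {i,j} is an edge.\<close>

definition theta_feasible :: "'a graph \<Rightarrow> ('a \<Rightarrow> 'a \<Rightarrow> real) \<Rightarrow> bool" where
  "theta_feasible G B \<longleftrightarrow>
     (\<forall>i\<in>verts G. \<forall>j\<in>verts G. B i j = B j i) \<and>
     (\<forall>x::'a \<Rightarrow> real. (\<Sum>i\<in>verts G. \<Sum>j\<in>verts G. x i * B i j * x j) \<ge> 0) \<and>
     (\<Sum>i\<in>verts G. B i i) = 1 \<and>
     (\<forall>i\<in>verts G. \<forall>j\<in>verts G. {i, j} \<in> edges G \<longrightarrow> B i j = 0)"

definition theta :: "'a graph \<Rightarrow> real" where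
  "theta G = Sup {(\<Sum>i\<in>verts G. \<Sum>j\<in>verts G. B i j) | B. theta_feasible G B}"

text \<open>Join of G1 (vertices of type 'a) and G2 (vertices of type 'b); disjointness
  of the vertex sets is realised by the sum type.\<close>
definition join :: "'a graph \<Rightarrow> 'b graph \<Rightarrow> ('a + 'b) graph" where
  "join G1 G2 =
     (Inl ` verts G1 \<union> Inr ` verts G2,
      (image Inl) ` edges G1 \<union> (image Inr) ` edges G2 \<union>
      {{Inl u, Inr w} | u w. u \<in> verts G1 \<and> w \<in> verts G2})"

text \<open>Splitting joins: the new vertex v'_i is Inr v_i.\<close>
definition NS_join :: "'a graph \<Rightarrow> 'b graph \<Rightarrow> (('a + 'b) + 'a) graph" where
  "NS_join G1 G2 =
     (Inl ` verts (join G1 G2) \<union> Inr ` verts G1,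
      (image Inl) ` edges (join G1 G2) \<union>
      {{Inr u, Inl (Inl w)} | u w. u \<in> verts G1 \<and> w \<in> verts G1 \<and> {u, w} \<in> edges G1})"

definition NNS_join :: "'a graph \<Rightarrow> 'b graph \<Rightarrow> (('a + 'b) + 'a) graph" where
  "NNS_join G1 G2 =
     (Inl ` verts (join G1 G2) \<union> Inr ` verts G1,
      (image Inl) ` edges (join G1 G2) \<union>
      {{Inr u, Inl (Inl w)} | u w. u \<in> verts G1 \<and> w \<in> verts G1 \<and> u \<noteq> w \<and> {u, w} \<notin> edges G1})"

end

theory Submission
  imports Defs
begin


definition qf :: "'v set \<Rightarrow> ('v \<Rightarrow> 'v \<Rightarrow> real) \<Rightarrow> ('v \<Rightarrow> real) \<Rightarrow> real" where
  "qf V B x = (\<Sum>i\<in>V. \<Sum>j\<in>V. x i * B i j * x j)"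
definition bf :: "'v set \<Rightarrow> ('v \<Rightarrow> 'v \<Rightarrow> real) \<Rightarrow> ('v \<Rightarrow> real) \<Rightarrow> ('v \<Rightarrow> real) \<Rightarrow> real" where
  "bf V B x y = (\<Sum>i\<in>V. \<Sum>j\<in>V. x i * B i j * y j)"

lemma qf_comb:
  assumes "\<forall>i\<in>V. \<forall>j\<in>V. B i j = B j i"
  shows "qf V B (\<lambda>i. a * x i + b * y i) = a^2 * qf V B x + 2*a*b * bf V B x y + b^2 * qf V B y"
proof -
  have sw: "(\<Sum>i\<in>V. \<Sum>j\<in>V. y i * B i j * x j) = bf V B x y"
    unfolding bf_def
    apply (subst sum.swap) using assms by (auto intro!: sum.cong simp: mult_ac)
  have "qf V B (\<lambda>i. a * x i + b * y i) = (\<Sum>i\<in>V. \<Sum>j\<in>V. a^2 * (x i * B i j * x j) + a*b*(x i * B i j * y j) + a*b*(y i * B i j * x j) + b^2*(y i * B i j * y j))"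
    unfolding qf_def by (intro sum.cong refl) (simp add: algebra_simps power2_eq_square)
  also have "\<dots> = a^2 * qf V B x + a*b*bf V B x y + a*b*(\<Sum>i\<in>V. \<Sum>j\<in>V. y i * B i j * x j) + b^2 * qf V B y"
    by (simp add: qf_def bf_def sum.distrib sum_distrib_left)
  finally show ?thesis using sw by simp
qed

lemma qf_cong: "(\<And>i. i \<in> V \<Longrightarrow> x i = y i) \<Longrightarrow> qf V B x = qf V B y"
  unfolding qf_def by (intro sum.cong refl) auto

lemma bf_cs:
  assumes sym: "\<forall>i\<in>V. \<forall>j\<in>V. B i j = B j i" and psd: "\<forall>x. qf V B x \<ge> 0"
  shows "(bf V B x y)^2 \<le> qf V B x * qf V B y"
proof -
  define p where "p = qf V B x"
  define q where "q = qf V B y"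
  define r where "r = bf V B x y"
  have key: "a^2 * p + 2*a*r + q \<ge> 0" for a
  proof -
    have "0 \<le> qf V B (\<lambda>i. a * x i + 1 * y i)" using psd by blast
    then show ?thesis unfolding qf_comb[OF sym] p_def q_def r_def by simp
  qed
  have p0: "p \<ge> 0" unfolding p_def using psd by auto
  have q0: "q \<ge> 0" unfolding q_def using psd by auto
  show ?thesis
  proof (cases "p = 0")
    case True
    show ?thesis
    proof (cases "r = 0")
      case True then show ?thesis using p0 q0 unfolding p_def q_def r_def by simp
    next
      case False
      have "(-(q+1)/(2*r))^2 * p + 2*(-(q+1)/(2*r))*r + q \<ge> 0" by (rule key)
      with \<open>p = 0\<close> False have "- (q+1) + q \<ge> 0" by (simp add: field_simps)
      then show ?thesis by simp
    qed
  next
    case False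
    then have pp: "p > 0" using p0 by simp
    have "(-r/p)^2 * p + 2*(-r/p)*r + q \<ge> 0" by (rule key)
    then have "q - r^2/p \<ge> 0" using pp by (simp add: field_simps power2_eq_square)
    then have "r^2 \<le> p * q" using pp by (simp add: field_simps)
    then show ?thesis unfolding p_def q_def r_def .
  qed
qed

lemma qf_two:
  assumes sym: "\<forall>i\<in>V. \<forall>j\<in>V. B i j = B j i" and psd: "\<forall>x. qf V B x \<ge> 0"
    and c: "c > 0" and d: "d > 0"
  shows "qf V B (\<lambda>i. x i + y i) \<le> (c + d) * (qf V B x / c + qf V B y / d)"
proof -
  define p where "p = qf V B x"
  define q where "q = qf V B y"
  define r where "r = bf V B x y"
  have e1: "qf V B (\<lambda>i. x i + y i) = p + 2*r + q"
    using qf_comb[OF sym, of 1 x 1 y] unfolding p_def q_def r_def by simp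
  have "qf V B (\<lambda>i. d * x i + (-c) * y i) \<ge> 0" using psd by auto
  then have "d^2 * p - 2*d*c*r + c^2*q \<ge> 0"
    using qf_comb[OF sym, of d x "-c" y] unfolding p_def q_def r_def by simp
  then have "2*r*(c*d) \<le> d^2*p + c^2*q" by (simp add: algebra_simps)
  then have "2*r \<le> (d^2*p + c^2*q)/(c*d)" using c d by (simp add: field_simps)
  also have "\<dots> = d*p/c + c*q/d" using c d by (simp add: field_simps power2_eq_square)
  finally have "p + 2*r + q \<le> p + d*p/c + c*q/d + q" by simp
  also have "\<dots> = (c + d) * (p / c + q / d)" using c d by (simp add: field_simps)
  finally show ?thesis using e1 unfolding p_def q_def by simp
qed

lemma qf_family:
  assumes sym: "\<forall>i\<in>V. \<forall>j\<in>V. B i j = B j i" and psd: "\<forall>x. qf V B x \<ge> 0"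
    and fin: "finite K" and cpos: "\<forall>k\<in>K. c k > 0"
  shows "qf V B (\<lambda>i. \<Sum>k\<in>K. y k i) \<le> (\<Sum>k\<in>K. c k) * (\<Sum>k\<in>K. qf V B (y k) / c k)"
  using fin cpos
proof (induction K rule: finite_induct)
  case empty
  then show ?case by (simp add: qf_def)
next
  case (insert k F)
  show ?case
  proof (cases "F = {}")
    case True then show ?thesis using insert by simp
  next
    case False
    have Cp: "(\<Sum>l\<in>F. c l) > 0" using insert False by (intro sum_pos) auto
    have ck: "c k > 0" using insert by auto
    have "qf V B (\<lambda>i. \<Sum>l\<in>insert k F. y l i) = qf V B (\<lambda>i. y k i + (\<Sum>l\<in>F. y l i))"
      using insert by simp
    also have "\<dots> \<le> (c k + (\<Sum>l\<in>F. c l)) * (qf V B (y k) / c k + qf V B (\<lambda>i. \<Sum>l\<in>F. y l i) / (\<Sum>l\<in>F. c l))"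
      by (rule qf_two[OF sym psd ck Cp])
    also have "\<dots> \<le> (c k + (\<Sum>l\<in>F. c l)) * (qf V B (y k) / c k + (\<Sum>l\<in>F. qf V B (y l) / c l))"
    proof -
      have "qf V B (\<lambda>i. \<Sum>l\<in>F. y l i) / (\<Sum>l\<in>F. c l) \<le> (\<Sum>l\<in>F. qf V B (y l) / c l)"
        using insert.IH insert.prems Cp by (simp add: divide_le_eq mult.commute)
      then show ?thesis using Cp ck by (intro mult_left_mono) auto
    qed
    also have "\<dots> = (\<Sum>l\<in>insert k F. c l) * (\<Sum>l\<in>insert k F. qf V B (y l) / c l)"
      using insert by simp
    finally show ?thesis .
  qed
qed

lemma qf_delta:
  assumes "finite V" "i \<in> V" "j \<in> V"
  shows "bf V B (\<lambda>k. if k = i then 1 else 0) (\<lambda>k. if k = j then 1 else 0) = B i j"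
proof -
  have "\<And>k. (\<Sum>l\<in>V. (if k = i then 1 else 0) * B k l * (if l = j then 1 else 0)) = (if k = i then B k j else (0::real))"
    using assms by (simp add: sum.delta if_distrib[of "\<lambda>x. _ * x"] cong: if_cong)
  then show ?thesis unfolding bf_def using assms by (simp add: sum.delta)
qed

lemma qf_delta2: "finite V \<Longrightarrow> i \<in> V \<Longrightarrow>
   qf V B (\<lambda>k. if k = i then 1 else 0) = B i i"
  using qf_delta[of V i i B] by (simp add: qf_def bf_def)

lemma psd_pair:
  assumes fin: "finite V" and sym: "\<forall>i\<in>V. \<forall>j\<in>V. B i j = B j i" and psd: "\<forall>x. qf V B x \<ge> 0"
    and "i \<in> V" "j \<in> V"
  shows "2 * B i j \<le> B i i + B j j"
proof -
  have "0 \<le> qf V B (\<lambda>k. 1 * (if k = i then 1 else 0) + (-1) * (if k = j then 1 else 0))"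
    using psd by blast
  also have "\<dots> = B i i - 2 * B i j + B j j"
    by (subst qf_comb[OF sym]) (simp add: qf_delta qf_delta2 assms)
  finally show ?thesis by simp
qed

lemma psd_sub_bound:
  assumes fin: "finite V" and sym: "\<forall>i\<in>V. \<forall>j\<in>V. B i j = B j i" and psd: "\<forall>x. qf V B x \<ge> 0"
    and W: "W \<subseteq> V"
  shows "(\<Sum>i\<in>W. \<Sum>j\<in>W. B i j) \<le> real (card W) * (\<Sum>i\<in>W. B i i)"
proof -
  have "2 * (\<Sum>i\<in>W. \<Sum>j\<in>W. B i j) = (\<Sum>i\<in>W. \<Sum>j\<in>W. 2 * B i j)"
    by (simp add: sum_distrib_left)
  also have "\<dots> \<le> (\<Sum>i\<in>W. \<Sum>j\<in>W. B i i + B j j)"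
    using W psd_pair[OF fin sym psd] by (intro sum_mono) auto
  also have "\<dots> = 2 * (real (card W) * (\<Sum>i\<in>W. B i i))"
  proof -
    have "(\<Sum>i\<in>W. \<Sum>j\<in>W. B i i + B j j) = (\<Sum>i\<in>W. real (card W) * B i i + (\<Sum>j\<in>W. B j j))"
      by (simp add: sum.distrib)
    also have "\<dots> = 2 * (real (card W) * (\<Sum>i\<in>W. B i i))"
      by (simp add: sum.distrib sum_distrib_left[symmetric])
    finally show ?thesis .
  qed
  finally show ?thesis by simp
qed



lemma verts_NS: "verts (NS_join G1 G2) = Inl ` (Inl ` verts G1 \<union> Inr ` verts G2) \<union> Inr ` verts G1"
  by (simp add: NS_join_def join_def verts_def)
lemma verts_NNS: "verts (NNS_join G1 G2) = Inl ` (Inl ` verts G1 \<union> Inr ` verts G2) \<union> Inr ` verts G1"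
  by (simp add: NNS_join_def join_def verts_def)

lemma sum_VS:
  assumes "finite A" "finite C"
  shows "sum f (Inl ` (Inl ` A \<union> Inr ` C) \<union> Inr ` A) =
    (\<Sum>v\<in>A. f (Inl (Inl v))) + (\<Sum>w\<in>C. f (Inl (Inr w))) + (\<Sum>v\<in>A. f (Inr v))"
proof -
  have "sum f (Inl ` (Inl ` A \<union> Inr ` C) \<union> Inr ` A) = sum f (Inl ` (Inl ` A \<union> Inr ` C)) + sum f (Inr ` A)"
    by (rule sum.union_disjoint) (use assms in auto)
  also have "sum f (Inl ` (Inl ` A \<union> Inr ` C)) = sum (f \<circ> Inl) (Inl ` A \<union> Inr ` C)"
    by (simp add: sum.reindex)
  also have "\<dots> = sum (f \<circ> Inl) (Inl ` A) + sum (f \<circ> Inl) (Inr ` C)"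
    by (rule sum.union_disjoint) (use assms in auto)
  finally show ?thesis by (simp add: sum.reindex)
qed

definition adjNS :: "'a graph \<Rightarrow> 'b graph \<Rightarrow> ('a + 'b) + 'a \<Rightarrow> ('a + 'b) + 'a \<Rightarrow> bool" where
  "adjNS G1 G2 x y \<longleftrightarrow>
    (\<exists>a b. x = Inl (Inl a) \<and> y = Inl (Inl b) \<and> {a,b} \<in> edges G1) \<or>
    (\<exists>a b. x = Inl (Inr a) \<and> y = Inl (Inr b) \<and> {a,b} \<in> edges G2) \<or>
    (\<exists>a b. a \<in> verts G1 \<and> b \<in> verts G2 \<and> ((x = Inl (Inl a) \<and> y = Inl (Inr b)) \<or> (x = Inl (Inr b) \<and> y = Inl (Inl a))))"

definition adjS :: "'a graph \<Rightarrow> 'b graph \<Rightarrow> ('a + 'b) + 'a \<Rightarrow> ('a + 'b) + 'a \<Rightarrow> bool" where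
  "adjS G1 G2 x y \<longleftrightarrow>
    (\<exists>u w. u \<in> verts G1 \<and> w \<in> verts G1 \<and> {u,w} \<in> edges G1 \<and> ((x = Inr u \<and> y = Inl (Inl w)) \<or> (x = Inl (Inl w) \<and> y = Inr u)))"

definition adjNNS :: "'a graph \<Rightarrow> 'b graph \<Rightarrow> ('a + 'b) + 'a \<Rightarrow> ('a + 'b) + 'a \<Rightarrow> bool" where
  "adjNNS G1 G2 x y \<longleftrightarrow>
    (\<exists>u w. u \<in> verts G1 \<and> w \<in> verts G1 \<and> u \<noteq> w \<and> {u,w} \<notin> edges G1 \<and> ((x = Inr u \<and> y = Inl (Inl w)) \<or> (x = Inl (Inl w) \<and> y = Inr u)))"

lemma edges_join_part:
  assumes "finite_simple_graph G1" "finite_simple_graph G2"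
  shows "{x,y} \<in> (image Inl) ` edges (join G1 G2) \<longleftrightarrow> adjNS G1 G2 x y"
proof
  assume "{x,y} \<in> (image Inl) ` edges (join G1 G2)"
  then obtain e where e: "e \<in> edges (join G1 G2)" "{x,y} = Inl ` e" by auto
  from e(1) consider (a) e1 where "e1 \<in> edges G1" "e = Inl ` e1" | (b) e2 where "e2 \<in> edges G2" "e = Inr ` e2"
    | (c) u w where "u \<in> verts G1" "w \<in> verts G2" "e = {Inl u, Inr w}"
    unfolding join_def edges_def by auto
  then show "adjNS G1 G2 x y"
  proof cases
    case a
    then obtain p q where "e1 = {p,q}" using assms(1) unfolding finite_simple_graph_def by blast
    with a e show ?thesis unfolding adjNS_def by (auto simp: doubleton_eq_iff insert_commute)
  next
    case b
    then obtain p q where "e2 = {p,q}" using assms(2) unfolding finite_simple_graph_def by blast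
    with b e show ?thesis unfolding adjNS_def by (auto simp: doubleton_eq_iff insert_commute)
  next
    case c
    with e show ?thesis unfolding adjNS_def by (auto simp: doubleton_eq_iff)
  qed
next
  assume "adjNS G1 G2 x y"
  then consider (a) a b where "x = Inl (Inl a)" "y = Inl (Inl b)" "{a,b} \<in> edges G1"
    | (b) a b where "x = Inl (Inr a)" "y = Inl (Inr b)" "{a,b} \<in> edges G2"
    | (c) a b where "a \<in> verts G1" "b \<in> verts G2" "{x,y} = {Inl (Inl a), Inl (Inr b)}"
    unfolding adjNS_def by (auto simp: insert_commute)
  then show "{x,y} \<in> (image Inl) ` edges (join G1 G2)"
  proof cases
    case a
    have "Inl ` {a,b} \<in> edges (join G1 G2)" using a(3) unfolding join_def edges_def by (metis (no_types, lifting) UnCI image_eqI snd_conv)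
    moreover have "{x,y} = Inl ` (Inl ` {a,b})" using a by auto
    ultimately show ?thesis by blast
  next
    case b
    have "Inr ` {a,b} \<in> edges (join G1 G2)" using b(3) unfolding join_def edges_def by (metis (no_types, lifting) UnCI image_eqI snd_conv)
    moreover have "{x,y} = Inl ` (Inr ` {a,b})" using b by auto
    ultimately show ?thesis by blast
  next
    case c
    have "{Inl a, Inr b} \<in> edges (join G1 G2)" using c unfolding join_def edges_def verts_def by auto
    moreover have "{x,y} = Inl ` {Inl a, Inr b}" using c by auto
    ultimately show ?thesis by blast
  qed
qed

lemma edges_NS:
  assumes "finite_simple_graph G1" "finite_simple_graph G2"
  shows "{x,y} \<in> edges (NS_join G1 G2) \<longleftrightarrow> adjNS G1 G2 x y \<or> adjS G1 G2 x y"
proof -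
  have "{x,y} \<in> edges (NS_join G1 G2) \<longleftrightarrow> {x,y} \<in> (image Inl) ` edges (join G1 G2) \<or>
     {x,y} \<in> {{Inr u, Inl (Inl w)} | u w. u \<in> verts G1 \<and> w \<in> verts G1 \<and> {u, w} \<in> edges G1}"
    unfolding NS_join_def edges_def by simp
  also have "\<dots> \<longleftrightarrow> adjNS G1 G2 x y \<or> adjS G1 G2 x y"
    unfolding edges_join_part[OF assms] adjS_def by (auto simp: doubleton_eq_iff)
  finally show ?thesis .
qed

lemma edges_NNS:
  assumes "finite_simple_graph G1" "finite_simple_graph G2"
  shows "{x,y} \<in> edges (NNS_join G1 G2) \<longleftrightarrow> adjNS G1 G2 x y \<or> adjNNS G1 G2 x y"
proof -
  have "{x,y} \<in> edges (NNS_join G1 G2) \<longleftrightarrow> {x,y} \<in> (image Inl) ` edges (join G1 G2) \<or>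
     {x,y} \<in> {{Inr u, Inl (Inl w)} | u w. u \<in> verts G1 \<and> w \<in> verts G1 \<and> u \<noteq> w \<and> {u, w} \<notin> edges G1}"
    unfolding NNS_join_def edges_def by simp
  also have "\<dots> \<longleftrightarrow> adjNS G1 G2 x y \<or> adjNNS G1 G2 x y"
    unfolding edges_join_part[OF assms] adjNNS_def by (auto simp: doubleton_eq_iff)
  finally show ?thesis .
qed



lemma sum_if_sub: "finite V \<Longrightarrow> S \<subseteq> V \<Longrightarrow> (\<Sum>i\<in>V. if i \<in> S then f i else 0) = sum f S"
  using sum.inter_restrict[of V f S] by (simp add: Int_absorb1)

lemma qf_indicator:
  assumes "finite V" "T \<subseteq> V"
  shows "qf V B (\<lambda>i. if i \<in> T then 1 else 0) = (\<Sum>i\<in>T. \<Sum>j\<in>T. B i j)"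
proof -
  have "qf V B (\<lambda>i. if i \<in> T then 1 else 0) = (\<Sum>i\<in>V. if i \<in> T then (\<Sum>j\<in>V. if j \<in> T then B i j else 0) else 0)"
    unfolding qf_def by (intro sum.cong refl) (auto intro!: sum.cong)
  also have "\<dots> = (\<Sum>i\<in>T. \<Sum>j\<in>T. B i j)"
    using assms by (simp add: sum_if_sub)
  finally show ?thesis .
qed

lemma feasible_sum_bound:
  assumes "finite (verts G)" "theta_feasible G B"
  shows "(\<Sum>i\<in>verts G. \<Sum>j\<in>verts G. B i j) \<le> real (card (verts G))"
  using psd_sub_bound[of "verts G" B "verts G"] assms unfolding theta_feasible_def qf_def by auto

lemma theta_bdd:
  assumes "finite (verts G)"
  shows "bdd_above {(\<Sum>i\<in>verts G. \<Sum>j\<in>verts G. B i j) | B. theta_feasible G B}"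
  using feasible_sum_bound[OF assms] unfolding bdd_above_def by blast

lemma theta_upper:
  assumes "finite (verts G)" "theta_feasible G B"
  shows "(\<Sum>i\<in>verts G. \<Sum>j\<in>verts G. B i j) \<le> theta G"
  unfolding theta_def by (rule cSup_upper) (use assms theta_bdd[OF assms(1)] in auto)

lemma indep_feasible:
  assumes fin: "finite (verts G)" and ind: "independent_set G S" and ne: "S \<noteq> {}"
  shows "theta_feasible G (\<lambda>i j. if i \<in> S \<and> j \<in> S then 1 / real (card S) else 0)"
    and "(\<Sum>i\<in>verts G. \<Sum>j\<in>verts G. (\<lambda>i j. if i \<in> S \<and> j \<in> S then 1 / real (card S) else 0) i j) = real (card S)"
proof -
  have SV: "S \<subseteq> verts G" using ind unfolding independent_set_def by auto
  have finS: "finite S" using SV fin finite_subset by auto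
  have cS: "card S > 0" using finS ne by (simp add: card_gt_0_iff)
  define B where "B = (\<lambda>i j. if i \<in> S \<and> j \<in> S then 1 / real (card S) else 0)"
  have q: "qf (verts G) B x = (\<Sum>i\<in>S. x i)^2 / real (card S)" for x
  proof -
    have "qf (verts G) B x = (\<Sum>i\<in>verts G. if i \<in> S then (\<Sum>j\<in>verts G. if j \<in> S then x i * x j / real (card S) else 0) else 0)"
      unfolding qf_def B_def by (intro sum.cong refl) (auto intro!: sum.cong)
    also have "\<dots> = (\<Sum>i\<in>S. \<Sum>j\<in>S. x i * x j / real (card S))"
      using fin SV by (simp add: sum_if_sub)
    also have "\<dots> = (\<Sum>i\<in>S. x i)^2 / real (card S)"
      by (simp add: power2_eq_square sum_distrib_left sum_distrib_right sum_divide_distrib mult.commute)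
    finally show ?thesis .
  qed
  show "theta_feasible G (\<lambda>i j. if i \<in> S \<and> j \<in> S then 1 / real (card S) else 0)"
    unfolding theta_feasible_def
  proof (intro conjI)
    show "\<forall>x. 0 \<le> (\<Sum>i\<in>verts G. \<Sum>j\<in>verts G. x i * (if i \<in> S \<and> j \<in> S then 1 / real (card S) else 0) * x j)"
      using q unfolding qf_def B_def by simp
    show "(\<Sum>i\<in>verts G. if i \<in> S \<and> i \<in> S then 1 / real (card S) else 0) = 1"
      using fin SV cS by (simp add: sum_if_sub)
    show "\<forall>i\<in>verts G. \<forall>j\<in>verts G. {i, j} \<in> edges G \<longrightarrow> (if i \<in> S \<and> j \<in> S then 1 / real (card S) else 0) = 0"
      using ind unfolding independent_set_def by auto
  qed auto
  have "(\<Sum>i\<in>verts G. \<Sum>j\<in>verts G. B i j) = (\<Sum>i\<in>verts G. if i \<in> S then (\<Sum>j\<in>verts G. if j \<in> S then 1 / real (card S) else 0) else 0)"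
    unfolding B_def by (intro sum.cong refl) auto
  also have "\<dots> = real (card S)" using fin SV cS by (simp add: sum_if_sub power2_eq_square)
  finally show "(\<Sum>i\<in>verts G. \<Sum>j\<in>verts G. (\<lambda>i j. if i \<in> S \<and> j \<in> S then 1 / real (card S) else 0) i j) = real (card S)"
    unfolding B_def .
qed

lemma indep_le_theta:
  assumes fin: "finite (verts G)" and ind: "independent_set G S" and ne: "S \<noteq> {}"
  shows "real (card S) \<le> theta G"
  using theta_upper[OF fin indep_feasible(1)[OF assms]] indep_feasible(2)[OF assms] by simp

lemma theta_ge_1:
  assumes fin: "finite (verts G)" and v: "v \<in> verts G" and nl: "{v} \<notin> edges G"
  shows "1 \<le> theta G" "\<exists>B. theta_feasible G B"
proof -
  have "independent_set G {v}" using v nl unfolding independent_set_def by auto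
  then show "1 \<le> theta G" using indep_le_theta[OF fin, of "{v}"] by simp
  show "\<exists>B. theta_feasible G B" using indep_feasible(1)[OF fin \<open>independent_set G {v}\<close>] by blast
qed

lemma theta_least:
  assumes "\<exists>B. theta_feasible G B" and "\<And>B. theta_feasible G B \<Longrightarrow> (\<Sum>i\<in>verts G. \<Sum>j\<in>verts G. B i j) \<le> c"
  shows "theta G \<le> c"
  unfolding theta_def by (rule cSup_least) (use assms in auto)



fun Bl :: "real \<Rightarrow> ('b \<Rightarrow> real) \<Rightarrow> ('b \<Rightarrow> 'b \<Rightarrow> real) \<Rightarrow> ('a + 'b) + 'a \<Rightarrow> ('a + 'b) + 'a \<Rightarrow> real" where
  "Bl s W B2 (Inr u) (Inr w) = 1"
| "Bl s W B2 (Inr u) (Inl (Inr w)) = W w"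
| "Bl s W B2 (Inl (Inr u)) (Inr w) = W u"
| "Bl s W B2 (Inl (Inr u)) (Inl (Inr w)) = s * B2 u w"
| "Bl s W B2 _ _ = 0"

lemma Bl_A1[simp]: "Bl s W B2 (Inl (Inl a)) j = 0"
  by (cases j) (rename_tac k, case_tac k, auto)
lemma Bl_A2[simp]: "Bl s W B2 i (Inl (Inl a)) = 0"
  by (cases i) (rename_tac k, case_tac k, auto)

lemma theta_lower_gen:
  fixes H :: "(('a + 'b) + 'a) graph" and G2 :: "'b graph" and V1 :: "'a set"
  assumes finV1: "finite V1" and finG2: "finite (verts G2)"
    and VH: "verts H = Inl ` (Inl ` V1 \<union> Inr ` verts G2) \<union> Inr ` V1"
    and E: "\<forall>x\<in>verts H. \<forall>y\<in>verts H. {x,y} \<in> edges H \<longrightarrow> (\<exists>a. x = Inl (Inl a)) \<or> (\<exists>a. y = Inl (Inl a)) \<or>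
               (\<exists>u w. x = Inl (Inr u) \<and> y = Inl (Inr w) \<and> {u,w} \<in> edges G2)"
    and feas: "theta_feasible G2 B2"
    and pos: "real (card V1) + (\<Sum>i\<in>verts G2. \<Sum>j\<in>verts G2. B2 i j) > 0"
  shows "\<exists>B. theta_feasible H B \<and> (\<Sum>i\<in>verts H. \<Sum>j\<in>verts H. B i j) = real (card V1) + (\<Sum>i\<in>verts G2. \<Sum>j\<in>verts G2. B2 i j)"
proof -
  define V2 where "V2 = verts G2"
  define n where "n = real (card V1)"
  define s where "s = (\<Sum>i\<in>V2. \<Sum>j\<in>V2. B2 i j)"
  define c where "c = n + s"
  define W where "W = (\<lambda>w. \<Sum>u\<in>V2. B2 u w)"
  define Bn where "Bn = (\<lambda>i j. Bl s W B2 (i::('a+'b)+'a) j / c)"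
  have cpos: "c > 0" using pos unfolding c_def n_def s_def V2_def .
  have fin2: "finite V2" using finG2 V2_def by simp
  have sym2: "\<forall>i\<in>V2. \<forall>j\<in>V2. B2 i j = B2 j i" and psd2: "\<forall>x. qf V2 B2 x \<ge> 0"
    and tr2: "(\<Sum>i\<in>V2. B2 i i) = 1" and e2: "\<forall>i\<in>V2. \<forall>j\<in>V2. {i, j} \<in> edges G2 \<longrightarrow> B2 i j = 0"
    using feas unfolding theta_feasible_def qf_def V2_def by auto
  have sW: "(\<Sum>w\<in>V2. W w) = s" unfolding W_def s_def by (rule sum.swap)
  have LW: "bf V2 B2 (\<lambda>_. 1) z = (\<Sum>w\<in>V2. W w * z w)" for z
    unfolding bf_def W_def by (subst sum.swap) (simp add: sum_distrib_right)
  have sq: "qf V2 B2 (\<lambda>_. 1) = s" unfolding qf_def s_def by simp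
  have expand: "qf (verts H) Bn x =
     (\<Sum>u\<in>V1. \<Sum>w\<in>V1. x (Inr u) * x (Inr w)) / c +
     (\<Sum>u\<in>V1. \<Sum>w\<in>V2. x (Inr u) * W w * x (Inl (Inr w))) / c +
     (\<Sum>u\<in>V2. \<Sum>w\<in>V1. x (Inl (Inr u)) * W u * x (Inr w)) / c +
     s * (\<Sum>u\<in>V2. \<Sum>w\<in>V2. x (Inl (Inr u)) * B2 u w * x (Inl (Inr w))) / c" for x :: "('a+'b)+'a \<Rightarrow> real"
    unfolding qf_def Bn_def VH V2_def[symmetric]
    by (simp add: sum_VS finV1 fin2 sum_divide_distrib sum.distrib sum_distrib_left mult_ac add_ac)
  show ?thesis
  proof (intro exI conjI)
    show "theta_feasible H Bn"
      unfolding theta_feasible_def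
    proof (intro conjI)
      show "\<forall>i\<in>verts H. \<forall>j\<in>verts H. Bn i j = Bn j i"
        unfolding VH Bn_def using sym2 V2_def by auto
      show "\<forall>x. 0 \<le> (\<Sum>i\<in>verts H. \<Sum>j\<in>verts H. x i * Bn i j * x j)"
      proof
        fix x :: "('a+'b)+'a \<Rightarrow> real"
        define X where "X = (\<Sum>u\<in>V1. x (Inr u))"
        define z where "z = (\<lambda>w. x (Inl (Inr w)))"
        define L where "L = (\<Sum>w\<in>V2. W w * z w)"
        have 1: "(\<Sum>u\<in>V1. \<Sum>w\<in>V1. x (Inr u) * x (Inr w)) = X^2"
          unfolding X_def power2_eq_square sum_product ..
        have 2: "(\<Sum>u\<in>V1. \<Sum>w\<in>V2. x (Inr u) * W w * x (Inl (Inr w))) = X * L"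
          unfolding X_def L_def z_def sum_product by (simp add: mult.assoc)
        have 3: "(\<Sum>u\<in>V2. \<Sum>w\<in>V1. x (Inl (Inr u)) * W u * x (Inr w)) = X * L"
          unfolding X_def L_def z_def sum_product by (subst sum.swap) (simp add: mult_ac)
        have 4: "(\<Sum>u\<in>V2. \<Sum>w\<in>V2. x (Inl (Inr u)) * B2 u w * x (Inl (Inr w))) = qf V2 B2 z"
          unfolding qf_def z_def ..
        have cs: "L^2 \<le> s * qf V2 B2 z"
          using bf_cs[OF sym2 psd2, of "\<lambda>_. 1" z] unfolding LW sq L_def .
        have "0 \<le> (X + L)^2" by simp
        also have "\<dots> \<le> X^2 + 2 * (X * L) + s * qf V2 B2 z" using cs by (simp add: power2_eq_square algebra_simps)
        finally have "0 \<le> X^2 + X * L + X * L + s * qf V2 B2 z" by (simp add: algebra_simps)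
        then have "0 \<le> (X^2 + X * L + X * L + s * qf V2 B2 z) / c" using cpos by simp
        then show "0 \<le> (\<Sum>i\<in>verts H. \<Sum>j\<in>verts H. x i * Bn i j * x j)"
          using expand[of x] unfolding 1 2 3 4 qf_def by (simp add: add_divide_distrib)
      qed
      show "(\<Sum>i\<in>verts H. Bn i i) = 1"
      proof -
        have "(\<Sum>i\<in>verts H. Bn i i) = (n + s * (\<Sum>i\<in>V2. B2 i i)) / c"
          unfolding Bn_def VH V2_def[symmetric] n_def
          by (simp add: sum_VS finV1 fin2 sum_divide_distrib[symmetric] sum_distrib_left)
        then show ?thesis using tr2 cpos unfolding c_def by simp
      qed
      show "\<forall>i\<in>verts H. \<forall>j\<in>verts H. {i, j} \<in> edges H \<longrightarrow> Bn i j = 0"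
      proof (intro ballI impI)
        fix i j assume ij: "i \<in> verts H" "j \<in> verts H" "{i, j} \<in> edges H"
        from E ij consider (a) a where "i = Inl (Inl a)" | (b) a where "j = Inl (Inl a)"
          | (c) u w where "i = Inl (Inr u)" "j = Inl (Inr w)" "{u,w} \<in> edges G2" by blast
        then show "Bn i j = 0"
        proof cases
          case c
          then have "u \<in> V2" "w \<in> V2" using ij(1,2) unfolding VH V2_def by auto
          then show ?thesis using c e2 unfolding Bn_def by simp
        qed (auto simp: Bn_def)
      qed
    qed
    show "(\<Sum>i\<in>verts H. \<Sum>j\<in>verts H. Bn i j) = real (card V1) + (\<Sum>i\<in>verts G2. \<Sum>j\<in>verts G2. B2 i j)"
    proof -
      have "(\<Sum>i\<in>verts H. \<Sum>j\<in>verts H. Bn i j) = (\<Sum>u\<in>V1. \<Sum>w\<in>V1. 1) / c + (\<Sum>u\<in>V1. \<Sum>w\<in>V2. W w) / c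
          + (\<Sum>u\<in>V2. \<Sum>w\<in>V1. W u) / c + s * (\<Sum>u\<in>V2. \<Sum>w\<in>V2. B2 u w) / c"
        unfolding Bn_def VH V2_def[symmetric]
        apply (simp add: sum_VS finV1 fin2 sum_divide_distrib sum.distrib sum_distrib_left mult_ac add_ac)
        by (simp add: sum_divide_distrib[symmetric] sum_distrib_right[symmetric] field_simps)
      also have "\<dots> = (n * n + n * (\<Sum>w\<in>V2. W w) + n * (\<Sum>w\<in>V2. W w) + s * s) / c"
      proof -
        have a: "(\<Sum>u\<in>V2. \<Sum>w\<in>V1. W u) = n * (\<Sum>w\<in>V2. W w)" 
        proof -
          have "(\<Sum>u\<in>V2. \<Sum>w\<in>V1. W u) = (\<Sum>u\<in>V2. n * W u)" by (simp add: n_def)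
          also have "\<dots> = n * (\<Sum>w\<in>V2. W w)" by (simp add: sum_distrib_left)
          finally show ?thesis .
        qed
        have b: "(\<Sum>u\<in>V1. \<Sum>w\<in>V2. W w) = n * (\<Sum>w\<in>V2. W w)" by (simp add: n_def)
        have d: "(\<Sum>u\<in>V1. \<Sum>w\<in>V1. (1::real)) = n * n" by (simp add: n_def)
        show ?thesis unfolding a b d s_def[symmetric] by (simp add: add_divide_distrib)
      qed
      also have "\<dots> = c"
      proof -
        have "n * n + n * s + n * s + s * s = c * c" unfolding c_def by (simp add: algebra_simps)
        then show ?thesis unfolding sW using cpos by simp
      qed
      finally show ?thesis unfolding c_def n_def s_def V2_def .
    qed
  qed
qed



lemma diag_nonneg:
  assumes "finite V" "\<forall>x. qf V B x \<ge> 0" "i \<in> V"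
  shows "B i i \<ge> 0"
  using assms qf_delta2[of V i B] by metis

lemma theta_upper_gen:
  fixes H :: "(('a + 'b) + 'a) graph" and G2 :: "'b graph" and V1 :: "'a set"
  assumes finV1: "finite V1" and finG2: "finite (verts G2)"
    and VH: "verts H = Inl ` (Inl ` V1 \<union> Inr ` verts G2) \<union> Inr ` V1"
    and EG2: "\<forall>u\<in>verts G2. \<forall>w\<in>verts G2. {u,w} \<in> edges G2 \<longrightarrow> {Inl (Inr u), Inl (Inr w)} \<in> edges H"
    and pi: "bij_betw \<pi> V1 V1" and M: "\<forall>v\<in>V1. {Inl (Inl (\<pi> v)), Inr v} \<in> edges H"
    and th2: "theta G2 > 0"
    and feas: "theta_feasible H B"
  shows "(\<Sum>i\<in>verts H. \<Sum>j\<in>verts H. B i j) \<le> real (card V1) + theta G2"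
proof -
  define V where "V = verts H"
  define V2 where "V2 = verts G2"
  define n where "n = real (card V1)"
  define \<theta> where "\<theta> = theta G2"
  have fin2: "finite V2" using finG2 V2_def by simp
  have finV: "finite V" unfolding V_def VH using finV1 finG2 by auto
  have sym: "\<forall>i\<in>V. \<forall>j\<in>V. B i j = B j i" and psd: "\<forall>x. qf V B x \<ge> 0"
    and tr: "(\<Sum>i\<in>V. B i i) = 1" and eH: "\<forall>i\<in>V. \<forall>j\<in>V. {i, j} \<in> edges H \<longrightarrow> B i j = 0"
    using feas unfolding theta_feasible_def qf_def V_def by auto
  define C where "C = (\<lambda>w. Inl (Inr w) :: ('a + 'b) + 'a) ` V2"
  have CV: "C \<subseteq> V" unfolding C_def V_def VH V2_def by auto
  have injC: "inj_on (\<lambda>w. Inl (Inr w) :: ('a + 'b) + 'a) V2" by (auto simp: inj_on_def)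
  define tC where "tC = (\<Sum>w\<in>V2. B (Inl (Inr w)) (Inl (Inr w)))"
  define SC where "SC = (\<Sum>u\<in>V2. \<Sum>w\<in>V2. B (Inl (Inr u)) (Inl (Inr w)))"
  define tA where "tA = (\<Sum>v\<in>V1. B (Inl (Inl v)) (Inl (Inl v)))"
  define tD where "tD = (\<Sum>v\<in>V1. B (Inr v) (Inr v))"
  have trsplit: "tA + tC + tD = 1"
    using tr unfolding V_def VH tA_def tC_def tD_def V2_def by (simp add: sum_VS finV1 finG2)
  have tC0: "tC \<ge> 0" unfolding tC_def
    by (intro sum_nonneg diag_nonneg[OF finV psd]) (auto simp: V_def VH V2_def)
  have SCC: "SC = (\<Sum>i\<in>C. \<Sum>j\<in>C. B i j)"
    unfolding SC_def C_def by (simp add: sum.reindex[OF injC])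
  have SCb: "SC \<le> tC * \<theta>"
  proof (cases "tC > 0")
    case False
    then have "tC = 0" using tC0 by simp
    have "SC \<le> real (card C) * (\<Sum>i\<in>C. B i i)"
      unfolding SCC by (rule psd_sub_bound[OF finV sym psd CV])
    also have "(\<Sum>i\<in>C. B i i) = tC" unfolding C_def tC_def by (simp add: sum.reindex[OF injC])
    finally show ?thesis using \<open>tC = 0\<close> by simp
  next
    case True
    define B2 where "B2 = (\<lambda>u w. B (Inl (Inr u)) (Inl (Inr w)) / tC)"
    have f2: "theta_feasible G2 B2"
      unfolding theta_feasible_def V2_def[symmetric]
    proof (intro conjI)
      show "\<forall>i\<in>V2. \<forall>j\<in>V2. B2 i j = B2 j i" unfolding B2_def using sym CV C_def by auto
      show "\<forall>x. 0 \<le> (\<Sum>i\<in>V2. \<Sum>j\<in>V2. x i * B2 i j * x j)"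
      proof
        fix x :: "'b \<Rightarrow> real"
        define x' where "x' = (\<lambda>i::('a + 'b) + 'a. case i of Inl (Inr u) \<Rightarrow> x u | _ \<Rightarrow> 0)"
        have "qf V B x' = (\<Sum>i\<in>V2. \<Sum>j\<in>V2. x i * B (Inl (Inr i)) (Inl (Inr j)) * x j)"
          unfolding qf_def V_def VH V2_def[symmetric] x'_def by (simp add: sum_VS finV1 fin2)
        then have "0 \<le> (\<Sum>i\<in>V2. \<Sum>j\<in>V2. x i * B (Inl (Inr i)) (Inl (Inr j)) * x j) / tC"
          using psd True by (metis divide_nonneg_pos)
        also have "\<dots> = (\<Sum>i\<in>V2. \<Sum>j\<in>V2. x i * B2 i j * x j)"
          unfolding B2_def by (simp add: sum_divide_distrib)
        finally show "0 \<le> (\<Sum>i\<in>V2. \<Sum>j\<in>V2. x i * B2 i j * x j)" .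
      qed
      show "(\<Sum>i\<in>V2. B2 i i) = 1" unfolding B2_def tC_def[symmetric] sum_divide_distrib[symmetric]
        using True by simp
      show "\<forall>i\<in>V2. \<forall>j\<in>V2. {i, j} \<in> edges G2 \<longrightarrow> B2 i j = 0"
      proof (intro ballI impI)
        fix i j assume ij: "i \<in> V2" "j \<in> V2" "{i, j} \<in> edges G2"
        then have "{Inl (Inr i), Inl (Inr j)} \<in> edges H" using EG2 V2_def by auto
        moreover have "Inl (Inr i) \<in> V" "Inl (Inr j) \<in> V" using ij CV C_def by auto
        ultimately have "B (Inl (Inr i)) (Inl (Inr j)) = 0" using eH by blast
        then show "B2 i j = 0" unfolding B2_def by simp
      qed
    qed
    have "(\<Sum>i\<in>V2. \<Sum>j\<in>V2. B2 i j) \<le> \<theta>"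
      using theta_upper[OF finG2 f2] unfolding V2_def \<theta>_def .
    moreover have "(\<Sum>i\<in>V2. \<Sum>j\<in>V2. B2 i j) = SC / tC"
      unfolding B2_def SC_def by (simp add: sum_divide_distrib)
    ultimately show ?thesis using True by (simp add: divide_le_eq mult.commute)
  qed
  define K where "K = insert None (Some ` V1)"
  define cc where "cc = (\<lambda>k::'a option. case k of None \<Rightarrow> \<theta> | Some v \<Rightarrow> (1::real))"
  define y where "y = (\<lambda>(k::'a option) (i::('a + 'b) + 'a). case k of None \<Rightarrow> (if i \<in> C then 1 else 0)
       | Some v \<Rightarrow> (if i \<in> {Inl (Inl (\<pi> v)), Inr v} then 1 else (0::real)))"
  have finK: "finite K" unfolding K_def using finV1 by auto
  have ccpos: "\<forall>k\<in>K. cc k > 0" unfolding cc_def \<theta>_def using th2 by (auto split: option.splits)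
  have NoneK: "None \<notin> Some ` V1" by auto
  have sumK: "(\<Sum>k\<in>K. f k) = f None + (\<Sum>v\<in>V1. f (Some v))" for f :: "'a option \<Rightarrow> real"
    unfolding K_def using finV1 NoneK by (simp add: sum.reindex)
  have piV: "\<pi> v \<in> V1" if "v \<in> V1" for v using pi that bij_betwE by blast
  have ones: "(\<Sum>k\<in>K. y k i) = 1" if "i \<in> V" for i
  proof -
    have "(\<Sum>k\<in>K. y k i) = y None i + (\<Sum>v\<in>V1. y (Some v) i)" by (rule sumK)
    moreover have "y None i + (\<Sum>v\<in>V1. y (Some v) i) = 1"
      using that unfolding V_def VH
    proof (elim UnE imageE)
      fix a a' assume h: "i = Inl a'" "a' = Inl a" "a \<in> V1"
      have "(\<Sum>v\<in>V1. y (Some v) i) = (\<Sum>v\<in>V1. (\<lambda>u. if u = a then 1 else 0) (\<pi> v))"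
        unfolding y_def h by (intro sum.cong refl) auto
      also have "\<dots> = (\<Sum>u\<in>V1. (if u = a then 1 else 0))"
        using sum.reindex_bij_betw[OF pi, of "\<lambda>u. if u = a then 1 else (0::real)"] by simp
      also have "\<dots> = 1" using h finV1 by simp
      finally show ?thesis unfolding y_def C_def h by auto
    next
      fix a a' assume h: "i = Inl a'" "a' = Inr a" "a \<in> verts G2"
      have "(\<Sum>v\<in>V1. y (Some v) i) = 0" unfolding y_def h by simp
      then show ?thesis unfolding y_def C_def h V2_def using h by auto
    next
      fix a assume h: "i = Inr a" "a \<in> V1"
      have "(\<Sum>v\<in>V1. y (Some v) i) = (\<Sum>v\<in>V1. if v = a then 1 else 0)"
        unfolding y_def h by (intro sum.cong refl) auto
      also have "\<dots> = 1" using h finV1 by simp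
      finally show ?thesis unfolding y_def C_def h by auto
    qed
    ultimately show ?thesis by simp
  qed
  have "(\<Sum>i\<in>V. \<Sum>j\<in>V. B i j) = qf V B (\<lambda>i. \<Sum>k\<in>K. y k i)"
    using ones by (simp add: qf_def)
  also have "\<dots> \<le> (\<Sum>k\<in>K. cc k) * (\<Sum>k\<in>K. qf V B (y k) / cc k)"
    by (rule qf_family[OF sym psd finK ccpos])
  also have "\<dots> \<le> (\<theta> + n) * 1"
  proof -
    have c1: "(\<Sum>k\<in>K. cc k) = \<theta> + n" unfolding sumK cc_def n_def by simp
    have yN: "qf V B (y None) = SC"
      unfolding y_def SCC using qf_indicator[OF finV CV] by simp
    have yS: "qf V B (y (Some v)) = B (Inl (Inl (\<pi> v))) (Inl (Inl (\<pi> v))) + B (Inr v) (Inr v)"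
      if v: "v \<in> V1" for v
    proof -
      have sub: "{Inl (Inl (\<pi> v)), Inr v} \<subseteq> V" using v piV unfolding V_def VH by auto
      have "qf V B (y (Some v)) = (\<Sum>i\<in>{Inl (Inl (\<pi> v)), Inr v}. \<Sum>j\<in>{Inl (Inl (\<pi> v)), Inr v}. B i j)"
        unfolding y_def using qf_indicator[OF finV sub] by simp
      also have "\<dots> = B (Inl (Inl (\<pi> v))) (Inl (Inl (\<pi> v))) + B (Inl (Inl (\<pi> v))) (Inr v)
          + (B (Inr v) (Inl (Inl (\<pi> v))) + B (Inr v) (Inr v))"
        by simp
      also have "B (Inl (Inl (\<pi> v))) (Inr v) = 0" using eH sub M v by auto
      also have "B (Inr v) (Inl (Inl (\<pi> v))) = 0" using eH sub M v by (auto simp: insert_commute)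
      finally show ?thesis by simp
    qed
    have c2: "(\<Sum>k\<in>K. qf V B (y k) / cc k) \<le> 1"
    proof -
      have "(\<Sum>k\<in>K. qf V B (y k) / cc k) = SC / \<theta> + (\<Sum>v\<in>V1. B (Inl (Inl (\<pi> v))) (Inl (Inl (\<pi> v))) + B (Inr v) (Inr v))"
        unfolding sumK cc_def yN using yS by simp
      also have "(\<Sum>v\<in>V1. B (Inl (Inl (\<pi> v))) (Inl (Inl (\<pi> v))) + B (Inr v) (Inr v)) = tA + tD"
        unfolding tA_def tD_def sum.distrib
        using sum.reindex_bij_betw[OF pi, of "\<lambda>u. B (Inl (Inl u)) (Inl (Inl u))"] by simp
      also have "SC / \<theta> \<le> tC" using SCb th2 unfolding \<theta>_def by (simp add: divide_le_eq)
      finally show ?thesis using trsplit by simp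
    qed
    have "(\<Sum>k\<in>K. cc k) > 0" using ccpos finK unfolding K_def by (intro sum_pos) auto
    then have "(\<Sum>k\<in>K. cc k) * (\<Sum>k\<in>K. qf V B (y k) / cc k) \<le> (\<Sum>k\<in>K. cc k) * 1"
      using c2 by (intro mult_left_mono) auto
    then show ?thesis using c1 by simp
  qed
  finally show ?thesis unfolding V_def n_def \<theta>_def by simp
qed



lemma simple_noloop: "finite_simple_graph G \<Longrightarrow> {v} \<notin> edges G"
proof
  assume "finite_simple_graph G" "{v} \<in> edges G"
  then obtain x y where "x \<noteq> y" "{v} = {x, y}" unfolding finite_simple_graph_def by blast
  then show False by (metis insertI1 insert_commute singletonD)
qed

lemma simple_edge_verts: "finite_simple_graph G \<Longrightarrow> {a,b} \<in> edges G \<Longrightarrow> a \<in> verts G \<and> b \<in> verts G"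
proof -
  assume "finite_simple_graph G" "{a,b} \<in> edges G"
  then obtain x y where "x \<in> verts G" "y \<in> verts G" "{a,b} = {x, y}" unfolding finite_simple_graph_def by blast
  then show ?thesis by (auto simp: doubleton_eq_iff)
qed

lemma simple_edge_neq: "finite_simple_graph G \<Longrightarrow> {a,b} \<in> edges G \<Longrightarrow> a \<noteq> b"
proof
  assume "finite_simple_graph G" "{a,b} \<in> edges G" "a = b"
  then show False using simple_noloop[of G a] by simp
qed

lemma alpha_finite: "finite (verts G) \<Longrightarrow> finite {card S | S. independent_set G S}"
proof -
  assume f: "finite (verts G)"
  have "{card S | S. independent_set G S} \<subseteq> card ` Pow (verts G)"
    unfolding independent_set_def by auto
  then show ?thesis using f finite_subset by blast
qed

lemma alpha_ge: "finite (verts G) \<Longrightarrow> independent_set G S \<Longrightarrow> card S \<le> alpha G"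
  unfolding alpha_def by (rule Max_ge) (auto simp: alpha_finite)

lemma alpha_ex: "finite (verts G) \<Longrightarrow> \<exists>S. independent_set G S \<and> card S = alpha G"
proof -
  assume f: "finite (verts G)"
  have "independent_set G {}" unfolding independent_set_def by auto
  then have "alpha G \<in> {card S | S. independent_set G S}"
    unfolding alpha_def using alpha_finite[OF f] by (intro Max_in) auto
  then show ?thesis by auto
qed

lemma omega_finite: "finite (verts G) \<Longrightarrow> finite {card S | S. clique G S}"
proof -
  assume f: "finite (verts G)"
  have "{card S | S. clique G S} \<subseteq> card ` Pow (verts G)"
    unfolding clique_def by auto
  then show ?thesis using f finite_subset by blast
qed

lemma omega_ge: "finite (verts G) \<Longrightarrow> clique G S \<Longrightarrow> card S \<le> omega G"
  unfolding omega_def by (rule Max_ge) (auto simp: omega_finite)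

lemma omega_ex: "finite (verts G) \<Longrightarrow> \<exists>S. clique G S \<and> card S = omega G"
proof -
  assume f: "finite (verts G)"
  have "clique G {}" unfolding clique_def by auto
  then have "omega G \<in> {card S | S. clique G S}"
    unfolding omega_def using omega_finite[OF f] by (intro Max_in) auto
  then show ?thesis by auto
qed

lemma omega_le: "finite (verts G) \<Longrightarrow> (\<And>S. clique G S \<Longrightarrow> card S \<le> k) \<Longrightarrow> omega G \<le> k"
proof -
  assume f: "finite (verts G)" and h: "\<And>S. clique G S \<Longrightarrow> card S \<le> k"
  obtain S where "clique G S" "card S = omega G" using omega_ex[OF f] by blast
  then show ?thesis using h by force
qed

lemma omega_pos: "finite_simple_graph G \<Longrightarrow> v \<in> verts G \<Longrightarrow> omega G \<ge> 1"
  using omega_ge[of G "{v}"] unfolding clique_def finite_simple_graph_def by auto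

lemma chi_le: "proper_coloring G k f \<Longrightarrow> chi G \<le> k"
  unfolding chi_def by (rule Least_le) blast

lemma chi_image:
  assumes fin: "finite (verts G)"
    and pr: "\<forall>x\<in>verts G. \<forall>y\<in>verts G. {x, y} \<in> edges G \<longrightarrow> f x \<noteq> (f y :: nat)"
  shows "chi G \<le> card (f ` verts G)"
proof -
  obtain h n where h: "h ` (f ` verts G) = {i::nat. i < n}" "inj_on h (f ` verts G)"
    using finite_imp_inj_to_nat_seg[of "f ` verts G"] fin by auto
  have cn: "card (f ` verts G) = n"
    using h card_image[OF h(2)] by simp
  have "proper_coloring G n (h \<circ> f)"
    unfolding proper_coloring_def
  proof (intro conjI ballI impI)
    fix v assume "v \<in> verts G" then show "(h \<circ> f) v < n" using h(1) by auto
  next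
    fix x y assume xy: "x \<in> verts G" "y \<in> verts G" "{x, y} \<in> edges G"
    then have "f x \<noteq> f y" using pr by auto
    then show "(h \<circ> f) x \<noteq> (h \<circ> f) y" using h(2) xy by (auto simp: inj_on_def)
  qed
  then show ?thesis using chi_le cn by metis
qed

lemma chi_ex_gen:
  assumes fin: "finite (verts G)" and nl: "\<And>v. {v} \<notin> edges G"
  shows "\<exists>f. proper_coloring G (chi G) f"
proof -
  obtain h n where h: "h ` verts G = {i::nat. i < n}" "inj_on h (verts G)"
    using finite_imp_inj_to_nat_seg[OF fin] by auto
  have "proper_coloring G n h"
    unfolding proper_coloring_def
  proof (intro conjI ballI impI)
    fix v assume "v \<in> verts G" then show "h v < n" using h(1) by auto
  next
    fix x y assume xy: "x \<in> verts G" "y \<in> verts G" "{x, y} \<in> edges G"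
    have "x \<noteq> y"
    proof
      assume "x = y" then show False using xy(3) nl[of x] by simp
    qed
    then show "h x \<noteq> h y" using h(2) xy by (auto simp: inj_on_def)
  qed
  then show ?thesis unfolding chi_def by (intro LeastI_ex[where P="\<lambda>k. \<exists>f. proper_coloring G k f"]) blast
qed

lemma chi_ex:
  assumes "finite_simple_graph G"
  shows "\<exists>f. proper_coloring G (chi G) f"
  using chi_ex_gen[of G] simple_noloop[OF assms] assms unfolding finite_simple_graph_def by blast

lemma chi_pos: "finite_simple_graph G \<Longrightarrow> v \<in> verts G \<Longrightarrow> chi G \<ge> 1"
proof -
  assume "finite_simple_graph G" "v \<in> verts G"
  moreover obtain f where "proper_coloring G (chi G) f" using chi_ex[OF \<open>finite_simple_graph G\<close>] by blast
  ultimately have "f v < chi G" unfolding proper_coloring_def by blast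
  then show ?thesis by simp
qed

lemma alpha_le_theta:
  assumes fin: "finite (verts G)" and v: "v \<in> verts G" and nl: "{v} \<notin> edges G"
  shows "real (alpha G) \<le> theta G"
proof -
  obtain S where S: "independent_set G S" "card S = alpha G" using alpha_ex[OF fin] by auto
  show ?thesis
  proof (cases "S = {}")
    case True then show ?thesis using S theta_ge_1(1)[OF fin v nl] by simp
  next
    case False then show ?thesis using S indep_le_theta[OF fin S(1)] by simp
  qed
qed



lemma H_noloop:
  fixes G1 :: "'a graph" and G2 :: "'b graph" and H :: "(('a + 'b) + 'a) graph"
  assumes G1: "finite_simple_graph G1" and G2: "finite_simple_graph G2"
    and EH: "\<forall>x y. {x,y} \<in> edges H \<longleftrightarrow> adjNS G1 G2 x y \<or> R x y"
    and RS: "\<forall>x y. R x y \<longrightarrow> (\<exists>u w. (x = Inr u \<and> y = Inl (Inl w)) \<or> (x = Inl (Inl w) \<and> y = Inr u))"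
  shows "{x} \<notin> edges H"
proof
  assume "{x} \<in> edges H"
  then have "adjNS G1 G2 x x \<or> R x x" using EH by (metis insert_absorb2)
  then show False
    using RS simple_noloop[OF G1] simple_noloop[OF G2] unfolding adjNS_def by auto
qed

lemma H_alpha_ge:
  fixes G1 :: "'a graph" and G2 :: "'b graph" and H :: "(('a + 'b) + 'a) graph"
  assumes G1: "finite_simple_graph G1" and G2: "finite_simple_graph G2"
    and VH: "verts H = Inl ` (Inl ` verts G1 \<union> Inr ` verts G2) \<union> Inr ` verts G1"
    and EH: "\<forall>x y. {x,y} \<in> edges H \<longleftrightarrow> adjNS G1 G2 x y \<or> R x y"
    and RS: "\<forall>x y. R x y \<longrightarrow> (\<exists>u w. (x = Inr u \<and> y = Inl (Inl w)) \<or> (x = Inl (Inl w) \<and> y = Inr u))"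
  shows "card (verts G1) + alpha G2 \<le> alpha H"
proof -
  have f1: "finite (verts G1)" and f2: "finite (verts G2)" using G1 G2 unfolding finite_simple_graph_def by auto
  have fH: "finite (verts H)" using VH f1 f2 by simp
  obtain S2 where S2: "independent_set G2 S2" "card S2 = alpha G2" using alpha_ex[OF f2] by blast
  have S2V: "S2 \<subseteq> verts G2" using S2 unfolding independent_set_def by auto
  define T where "T = Inr ` verts G1 \<union> (\<lambda>w. Inl (Inr w) :: ('a + 'b) + 'a) ` S2"
  have indT: "independent_set H T"
    unfolding independent_set_def
  proof (intro conjI ballI)
    show "T \<subseteq> verts H" unfolding T_def VH using S2V by auto
  next
    fix x y assume xy: "x \<in> T" "y \<in> T"
    show "{x, y} \<notin> edges H"
    proof
      assume "{x, y} \<in> edges H"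
      then have "adjNS G1 G2 x y \<or> R x y" using EH by blast
      then show False
      proof
        assume "R x y"
        then show False using RS xy unfolding T_def by blast
      next
        assume "adjNS G1 G2 x y"
        then show False using xy S2(1) unfolding adjNS_def T_def independent_set_def by blast
      qed
    qed
  qed
  have "card T = card (verts G1) + card S2"
    unfolding T_def
    by (subst card_Un_disjoint) (use f1 f2 S2V finite_subset in \<open>auto simp: card_image inj_on_def\<close>)
  then show ?thesis using alpha_ge[OF fH indT] S2 by simp
qed

lemma H_omega:
  fixes G1 :: "'a graph" and G2 :: "'b graph" and H :: "(('a + 'b) + 'a) graph"
  assumes G1: "finite_simple_graph G1" and G2: "finite_simple_graph G2"
    and VH: "verts H = Inl ` (Inl ` verts G1 \<union> Inr ` verts G2) \<union> Inr ` verts G1"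
    and EH: "\<forall>x y. {x,y} \<in> edges H \<longleftrightarrow> adjNS G1 G2 x y \<or> R x y"
    and RS: "\<forall>x y. R x y \<longrightarrow> (\<exists>u w. (x = Inr u \<and> y = Inl (Inl w)) \<or> (x = Inl (Inl w) \<and> y = Inr u))"
    and ne: "verts G2 \<noteq> {}"
  shows "omega H = omega G1 + omega G2"
proof -
  have f1: "finite (verts G1)" and f2: "finite (verts G2)" using G1 G2 unfolding finite_simple_graph_def by auto
  have fH: "finite (verts H)" using VH f1 f2 by simp
  have ge: "omega G1 + omega G2 \<le> omega H"
  proof -
    obtain K1 where K1: "clique G1 K1" "card K1 = omega G1" using omega_ex[OF f1] by blast
    obtain K2 where K2: "clique G2 K2" "card K2 = omega G2" using omega_ex[OF f2] by blast
    have K1V: "K1 \<subseteq> verts G1" and K2V: "K2 \<subseteq> verts G2" using K1 K2 unfolding clique_def by auto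
    define K where "K = (\<lambda>a. Inl (Inl a) :: ('a + 'b) + 'a) ` K1 \<union> (\<lambda>b. Inl (Inr b)) ` K2"
    have cK: "clique H K"
      unfolding clique_def
    proof (intro conjI ballI impI)
      show "K \<subseteq> verts H" unfolding K_def VH using K1V K2V by (simp add: image_mono image_image[symmetric] le_supI1 le_supI2)
    next
      fix x y assume xy: "x \<in> K" "y \<in> K" "x \<noteq> y"
      have "adjNS G1 G2 x y"
        using xy(1,2) unfolding K_def
      proof (elim UnE imageE)
        fix a b assume h: "a \<in> K1" "x = Inl (Inl a)" "b \<in> K1" "y = Inl (Inl b)"
        then have "{a, b} \<in> edges G1" using K1(1) xy(3) unfolding clique_def by blast
        then show ?thesis unfolding adjNS_def h by blast
      next
        fix a b assume h: "a \<in> K1" "x = Inl (Inl a)" "b \<in> K2" "y = Inl (Inr b)"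
        then show ?thesis unfolding adjNS_def using K1V K2V by blast
      next
        fix a b assume h: "a \<in> K2" "x = Inl (Inr a)" "b \<in> K1" "y = Inl (Inl b)"
        then show ?thesis unfolding adjNS_def using K1V K2V by blast
      next
        fix a b assume h: "a \<in> K2" "x = Inl (Inr a)" "b \<in> K2" "y = Inl (Inr b)"
        then have "{a, b} \<in> edges G2" using K2(1) xy(3) unfolding clique_def by blast
        then show ?thesis unfolding adjNS_def h by blast
      qed
      then show "{x, y} \<in> edges H" using EH by blast
    qed
    have fK1: "finite K1" using K1V f1 finite_subset by blast
    have fK2: "finite K2" using K2V f2 finite_subset by blast
    have "card K = card K1 + card K2"
      unfolding K_def
      by (subst card_Un_disjoint) (use fK1 fK2 in \<open>auto simp: card_image inj_on_def\<close>)
    then show ?thesis using omega_ge[OF fH cK] K1 K2 by simp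
  qed
  have le: "omega H \<le> omega G1 + omega G2"
  proof (rule omega_le[OF fH])
    fix K assume cK: "clique H K"
    have KV: "K \<subseteq> verts H" using cK unfolding clique_def by auto
    define K1 where "K1 = {a. Inl (Inl a) \<in> K}"
    define K2 where "K2 = {b. Inl (Inr b) \<in> K}"
    define KD where "KD = {u. Inr u \<in> K}"
    have K1V: "K1 \<subseteq> verts G1" and K2V: "K2 \<subseteq> verts G2" and KDV: "KD \<subseteq> verts G1"
      using KV unfolding K1_def K2_def KD_def VH by auto
    have fK1: "finite K1" using K1V f1 finite_subset by blast
    have fK2: "finite K2" using K2V f2 finite_subset by blast
    have fKD: "finite KD" using KDV f1 finite_subset by blast
    have Keq: "K = (\<lambda>a. Inl (Inl a)) ` K1 \<union> (\<lambda>b. Inl (Inr b)) ` K2 \<union> Inr ` KD"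
    proof
      show "K \<subseteq> (\<lambda>a. Inl (Inl a)) ` K1 \<union> (\<lambda>b. Inl (Inr b)) ` K2 \<union> Inr ` KD"
      proof
        fix x assume "x \<in> K"
        then show "x \<in> (\<lambda>a. Inl (Inl a)) ` K1 \<union> (\<lambda>b. Inl (Inr b)) ` K2 \<union> Inr ` KD"
          unfolding K1_def K2_def KD_def
          by (cases x) (rename_tac z, case_tac z, auto)
      qed
    qed (auto simp: K1_def K2_def KD_def)
    have adjK: "{x, y} \<in> edges H" if "x \<in> K" "y \<in> K" "x \<noteq> y" for x y
      using cK that unfolding clique_def by blast
    have cK1: "clique G1 K1"
      unfolding clique_def
    proof (intro conjI ballI impI)
      show "K1 \<subseteq> verts G1" by (rule K1V)
    next
      fix a b assume ab: "a \<in> K1" "b \<in> K1" "a \<noteq> b"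
      then have "{Inl (Inl a), Inl (Inl b)} \<in> edges H" using adjK unfolding K1_def by auto
      then have "adjNS G1 G2 (Inl (Inl a)) (Inl (Inl b)) \<or> R (Inl (Inl a)) (Inl (Inl b))" using EH by blast
      then show "{a, b} \<in> edges G1" using RS unfolding adjNS_def by auto
    qed
    have cK2: "clique G2 K2"
      unfolding clique_def
    proof (intro conjI ballI impI)
      show "K2 \<subseteq> verts G2" by (rule K2V)
    next
      fix a b assume ab: "a \<in> K2" "b \<in> K2" "a \<noteq> b"
      then have "{Inl (Inr a), Inl (Inr b)} \<in> edges H" using adjK unfolding K2_def by auto
      then have "adjNS G1 G2 (Inl (Inr a)) (Inl (Inr b)) \<or> R (Inl (Inr a)) (Inl (Inr b))" using EH by blast
      then show "{a, b} \<in> edges G2" using RS unfolding adjNS_def by auto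
    qed
    have c1: "card K1 \<le> omega G1" using omega_ge[OF f1 cK1] .
    have c2: "card K2 \<le> omega G2" using omega_ge[OF f2 cK2] .
    have cK: "card K \<le> card K1 + card K2 + card KD"
    proof -
      have "card K \<le> card ((\<lambda>a. Inl (Inl a) :: ('a + 'b) + 'a) ` K1 \<union> (\<lambda>b. Inl (Inr b)) ` K2) + card (Inr ` KD :: (('a + 'b) + 'a) set)"
        unfolding Keq by (rule card_Un_le)
      also have "\<dots> \<le> card ((\<lambda>a. Inl (Inl a) :: ('a + 'b) + 'a) ` K1) + card ((\<lambda>b. Inl (Inr b) :: ('a + 'b) + 'a) ` K2) + card (Inr ` KD :: (('a + 'b) + 'a) set)"
        using card_Un_le by simp
      also have "\<dots> \<le> card K1 + card K2 + card KD"
        by (intro add_mono card_image_le fK1 fK2 fKD)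
      finally show ?thesis .
    qed
    have o2: "omega G2 \<ge> 1" using ne omega_pos[OF G2] by blast
    show "card K \<le> omega G1 + omega G2"
    proof (cases "KD = {}")
      case True then show ?thesis using cK c1 c2 by simp
    next
      case False
      then obtain u where u: "u \<in> KD" by blast
      have "K2 = {}"
      proof (rule ccontr)
        assume "K2 \<noteq> {}"
        then obtain b where b: "b \<in> K2" by blast
        then have "{Inr u, Inl (Inr b)} \<in> edges H" using adjK u unfolding K2_def KD_def by auto
        then have "adjNS G1 G2 (Inr u) (Inl (Inr b)) \<or> R (Inr u) (Inl (Inr b))" using EH by blast
        then show False using RS unfolding adjNS_def by auto
      qed
      moreover have "KD = {u}"
      proof (rule ccontr)
        assume "KD \<noteq> {u}"
        then obtain w where w: "w \<in> KD" "w \<noteq> u" using u by blast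
        then have "{Inr u, Inr w} \<in> edges H" using adjK u unfolding KD_def by auto
        then have "adjNS G1 G2 (Inr u) (Inr w) \<or> R (Inr u) (Inr w)" using EH by blast
        then show False using RS unfolding adjNS_def by auto
      qed
      ultimately show ?thesis using cK c1 o2 by simp
    qed
  qed
  show ?thesis using ge le by simp
qed

lemma H_chi_ge:
  fixes G1 :: "'a graph" and G2 :: "'b graph" and H :: "(('a + 'b) + 'a) graph"
  assumes G1: "finite_simple_graph G1" and G2: "finite_simple_graph G2"
    and VH: "verts H = Inl ` (Inl ` verts G1 \<union> Inr ` verts G2) \<union> Inr ` verts G1"
    and EH: "\<forall>x y. {x,y} \<in> edges H \<longleftrightarrow> adjNS G1 G2 x y \<or> R x y"
    and RS: "\<forall>x y. R x y \<longrightarrow> (\<exists>u w. (x = Inr u \<and> y = Inl (Inl w)) \<or> (x = Inl (Inl w) \<and> y = Inr u))"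
  shows "chi G1 + chi G2 \<le> chi H"
proof -
  have f1: "finite (verts G1)" and f2: "finite (verts G2)" using G1 G2 unfolding finite_simple_graph_def by auto
  have fH: "finite (verts H)" using VH f1 f2 by simp
  obtain f where f: "proper_coloring H (chi H) f"
    using chi_ex_gen[OF fH] H_noloop[OF G1 G2 EH RS] by blast
  have fl: "f x < chi H" if "x \<in> verts H" for x using f that unfolding proper_coloring_def by auto
  have fe: "f x \<noteq> f y" if "x \<in> verts H" "y \<in> verts H" "{x, y} \<in> edges H" for x y
    using f that unfolding proper_coloring_def by auto
  define SA where "SA = (\<lambda>v. f (Inl (Inl v))) ` verts G1"
  define SC where "SC = (\<lambda>w. f (Inl (Inr w))) ` verts G2"
  have c1: "chi G1 \<le> card SA" unfolding SA_def
  proof (rule chi_image[OF f1], intro ballI impI)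
    fix x y assume xy: "x \<in> verts G1" "y \<in> verts G1" "{x, y} \<in> edges G1"
    then have "{Inl (Inl x), Inl (Inl y)} \<in> edges H" using EH unfolding adjNS_def by blast
    then show "f (Inl (Inl x)) \<noteq> f (Inl (Inl y))" using fe xy unfolding VH by auto
  qed
  have c2: "chi G2 \<le> card SC" unfolding SC_def
  proof (rule chi_image[OF f2], intro ballI impI)
    fix x y assume xy: "x \<in> verts G2" "y \<in> verts G2" "{x, y} \<in> edges G2"
    then have "{Inl (Inr x), Inl (Inr y)} \<in> edges H" using EH unfolding adjNS_def by blast
    then show "f (Inl (Inr x)) \<noteq> f (Inl (Inr y))" using fe xy unfolding VH by auto
  qed
  have disj: "SA \<inter> SC = {}"
  proof (rule ccontr)
    assume "SA \<inter> SC \<noteq> {}"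
    then obtain a b where ab: "a \<in> verts G1" "b \<in> verts G2" "f (Inl (Inl a)) = f (Inl (Inr b))"
      unfolding SA_def SC_def by auto
    then have "{Inl (Inl a), Inl (Inr b)} \<in> edges H" using EH unfolding adjNS_def by blast
    then show False using fe ab unfolding VH by auto
  qed
  have sub: "SA \<union> SC \<subseteq> {..<chi H}" unfolding SA_def SC_def using fl unfolding VH by auto
  have "card SA + card SC = card (SA \<union> SC)"
    using disj f1 f2 unfolding SA_def SC_def by (simp add: card_Un_disjoint)
  also have "\<dots> \<le> chi H" using card_mono[OF _ sub] by simp
  finally show ?thesis using c1 c2 by simp
qed



lemma EH_NS:
  assumes "finite_simple_graph G1" "finite_simple_graph G2"
  shows "\<forall>x y. {x,y} \<in> edges (NS_join G1 G2) \<longleftrightarrow> adjNS G1 G2 x y \<or> adjS G1 G2 x y"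
  using edges_NS[OF assms] by blast

lemma EH_NNS:
  assumes "finite_simple_graph G1" "finite_simple_graph G2"
  shows "\<forall>x y. {x,y} \<in> edges (NNS_join G1 G2) \<longleftrightarrow> adjNS G1 G2 x y \<or> adjNNS G1 G2 x y"
  using edges_NNS[OF assms] by blast

lemma RS_S: "\<forall>x y. adjS G1 G2 x y \<longrightarrow> (\<exists>u w. (x = Inr u \<and> y = Inl (Inl w)) \<or> (x = Inl (Inl w) \<and> y = Inr u))"
  unfolding adjS_def by blast

lemma RS_NNS: "\<forall>x y. adjNNS G1 G2 x y \<longrightarrow> (\<exists>u w. (x = Inr u \<and> y = Inl (Inl w)) \<or> (x = Inl (Inl w) \<and> y = Inr u))"
  unfolding adjNNS_def by blast

lemma H_theta_lower:
  fixes G1 :: "'a graph" and G2 :: "'b graph" and H :: "(('a + 'b) + 'a) graph"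
  assumes G1: "finite_simple_graph G1" and G2: "finite_simple_graph G2"
    and VH: "verts H = Inl ` (Inl ` verts G1 \<union> Inr ` verts G2) \<union> Inr ` verts G1"
    and EH: "\<forall>x y. {x,y} \<in> edges H \<longleftrightarrow> adjNS G1 G2 x y \<or> R x y"
    and RS: "\<forall>x y. R x y \<longrightarrow> (\<exists>u w. (x = Inr u \<and> y = Inl (Inl w)) \<or> (x = Inl (Inl w) \<and> y = Inr u))"
    and ne: "verts G2 \<noteq> {}"
  shows "real (card (verts G1)) + theta G2 \<le> theta H"
proof -
  have f1: "finite (verts G1)" and f2: "finite (verts G2)" using G1 G2 unfolding finite_simple_graph_def by auto
  have fH: "finite (verts H)" using VH f1 f2 by simp
  obtain w0 where w0: "w0 \<in> verts G2" using ne by blast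
  have vH: "Inl (Inr w0) \<in> verts H" unfolding VH using w0 by auto
  have thH: "1 \<le> theta H" using theta_ge_1(1)[OF fH vH H_noloop[OF G1 G2 EH RS]] .
  have ex2: "\<exists>B. theta_feasible G2 B" using theta_ge_1(2)[OF f2 w0 simple_noloop[OF G2]] .
  have E: "\<forall>x\<in>verts H. \<forall>y\<in>verts H. {x,y} \<in> edges H \<longrightarrow> (\<exists>a. x = Inl (Inl a)) \<or> (\<exists>a. y = Inl (Inl a)) \<or>
               (\<exists>u w. x = Inl (Inr u) \<and> y = Inl (Inr w) \<and> {u,w} \<in> edges G2)"
    using EH RS unfolding adjNS_def by blast
  have "theta G2 \<le> theta H - real (card (verts G1))"
    unfolding theta_def[of G2]
  proof (rule cSup_least)
    show "{\<Sum>i\<in>verts G2. \<Sum>j\<in>verts G2. B i j |B. theta_feasible G2 B} \<noteq> {}" using ex2 by blast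
  next
    fix s assume "s \<in> {\<Sum>i\<in>verts G2. \<Sum>j\<in>verts G2. B i j |B. theta_feasible G2 B}"
    then obtain B2 where B2: "theta_feasible G2 B2" "s = (\<Sum>i\<in>verts G2. \<Sum>j\<in>verts G2. B2 i j)" by blast
    have psdB: "\<forall>x. qf (verts G2) B2 x \<ge> 0" using B2(1) unfolding theta_feasible_def qf_def by blast
    then have "qf (verts G2) B2 (\<lambda>_. 1) \<ge> 0" by blast
    then have s0: "s \<ge> 0" using B2(2) unfolding qf_def by simp
    show "s \<le> theta H - real (card (verts G1))"
    proof (cases "real (card (verts G1)) + s > 0")
      case True
      obtain B where B: "theta_feasible H B" "(\<Sum>i\<in>verts H. \<Sum>j\<in>verts H. B i j) = real (card (verts G1)) + s"
        using theta_lower_gen[OF f1 f2 VH E B2(1)] True B2(2) by auto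
      then show ?thesis using theta_upper[OF fH B(1)] by simp
    next
      case False
      then show ?thesis using s0 thH by simp
    qed
  qed
  then show ?thesis by simp
qed

lemma H_theta_upper:
  fixes G1 :: "'a graph" and G2 :: "'b graph" and H :: "(('a + 'b) + 'a) graph"
  assumes G1: "finite_simple_graph G1" and G2: "finite_simple_graph G2"
    and VH: "verts H = Inl ` (Inl ` verts G1 \<union> Inr ` verts G2) \<union> Inr ` verts G1"
    and EH: "\<forall>x y. {x,y} \<in> edges H \<longleftrightarrow> adjNS G1 G2 x y \<or> R x y"
    and RS: "\<forall>x y. R x y \<longrightarrow> (\<exists>u w. (x = Inr u \<and> y = Inl (Inl w)) \<or> (x = Inl (Inl w) \<and> y = Inr u))"
    and ne: "verts G2 \<noteq> {}"
    and pi: "bij_betw \<pi> (verts G1) (verts G1)" and M: "\<forall>v\<in>verts G1. {Inl (Inl (\<pi> v)), Inr v} \<in> edges H"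
  shows "theta H \<le> real (card (verts G1)) + theta G2"
proof -
  have f1: "finite (verts G1)" and f2: "finite (verts G2)" using G1 G2 unfolding finite_simple_graph_def by auto
  have fH: "finite (verts H)" using VH f1 f2 by simp
  obtain w0 where w0: "w0 \<in> verts G2" using ne by blast
  have vH: "Inl (Inr w0) \<in> verts H" unfolding VH using w0 by auto
  have exH: "\<exists>B. theta_feasible H B" using theta_ge_1(2)[OF fH vH H_noloop[OF G1 G2 EH RS]] .
  have th2: "theta G2 > 0" using theta_ge_1(1)[OF f2 w0 simple_noloop[OF G2]] by simp
  have EG2: "\<forall>u\<in>verts G2. \<forall>w\<in>verts G2. {u,w} \<in> edges G2 \<longrightarrow> {Inl (Inr u), Inl (Inr w)} \<in> edges H"
    using EH unfolding adjNS_def by blast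
  show ?thesis
    by (rule theta_least[OF exH]) (rule theta_upper_gen[OF f1 f2 VH EG2 pi M th2])
qed

lemma chi_NS_le:
  fixes G1 :: "'a graph" and G2 :: "'b graph"
  assumes G1: "finite_simple_graph G1" and G2: "finite_simple_graph G2"
  shows "chi (NS_join G1 G2) \<le> chi G1 + chi G2"
proof -
  obtain f1 where f1: "proper_coloring G1 (chi G1) f1" using chi_ex[OF G1] by blast
  obtain f2 where f2: "proper_coloring G2 (chi G2) f2" using chi_ex[OF G2] by blast
  define f where "f = (\<lambda>i::('a + 'b) + 'a. case i of Inl (Inl v) \<Rightarrow> f1 v | Inl (Inr w) \<Rightarrow> chi G1 + f2 w | Inr v \<Rightarrow> f1 v)"
  have "proper_coloring (NS_join G1 G2) (chi G1 + chi G2) f"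
    unfolding proper_coloring_def
  proof (intro conjI ballI impI)
    fix v assume "v \<in> verts (NS_join G1 G2)"
    then show "f v < chi G1 + chi G2" using f1 f2 unfolding verts_NS f_def proper_coloring_def by fastforce
  next
    fix x y assume xy: "x \<in> verts (NS_join G1 G2)" "y \<in> verts (NS_join G1 G2)" "{x, y} \<in> edges (NS_join G1 G2)"
    then have "adjNS G1 G2 x y \<or> adjS G1 G2 x y" using edges_NS[OF G1 G2] by blast
    then show "f x \<noteq> f y"
      using xy(1,2) f1 f2 unfolding verts_NS f_def proper_coloring_def adjNS_def adjS_def
      by (elim disjE exE conjE) (auto simp: insert_commute)
  qed
  then show ?thesis by (rule chi_le)
qed

lemma chi_NNS_le:
  fixes G1 :: "'a graph" and G2 :: "'b graph"
  assumes G1: "finite_simple_graph G1" and G2: "finite_simple_graph G2" and ne: "verts G2 \<noteq> {}"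
  shows "chi (NNS_join G1 G2) \<le> chi G1 + chi G2"
proof -
  obtain f1 where f1: "proper_coloring G1 (chi G1) f1" using chi_ex[OF G1] by blast
  obtain f2 where f2: "proper_coloring G2 (chi G2) f2" using chi_ex[OF G2] by blast
  have c2: "chi G2 \<ge> 1" using ne chi_pos[OF G2] by blast
  define f where "f = (\<lambda>i::('a + 'b) + 'a. case i of Inl (Inl v) \<Rightarrow> f1 v | Inl (Inr w) \<Rightarrow> chi G1 + f2 w | Inr v \<Rightarrow> chi G1)"
  have "proper_coloring (NNS_join G1 G2) (chi G1 + chi G2) f"
    unfolding proper_coloring_def
  proof (intro conjI ballI impI)
    fix v assume "v \<in> verts (NNS_join G1 G2)"
    then show "f v < chi G1 + chi G2" using f1 f2 c2 unfolding verts_NNS f_def proper_coloring_def by fastforce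
  next
    fix x y assume xy: "x \<in> verts (NNS_join G1 G2)" "y \<in> verts (NNS_join G1 G2)" "{x, y} \<in> edges (NNS_join G1 G2)"
    then have "adjNS G1 G2 x y \<or> adjNNS G1 G2 x y" using edges_NNS[OF G1 G2] by blast
    then show "f x \<noteq> f y"
      using xy(1,2) f1 f2 unfolding verts_NNS f_def proper_coloring_def adjNS_def adjNNS_def
      by (elim disjE exE conjE) (auto simp: insert_commute)
  qed
  then show ?thesis by (rule chi_le)
qed



theorem mainTheorem5:
  fixes G1 :: "'a graph" and G2 :: "'b graph"
  assumes "finite_simple_graph G1" and "finite_simple_graph G2"
    and "verts G2 \<noteq> {}"
  shows
    "alpha (NS_join G1 G2) \<ge> card (verts G1) + alpha G2 \<and>
     alpha (NNS_join G1 G2) \<ge> card (verts G1) + alpha G2 \<and>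
     omega (NS_join G1 G2) = omega G1 + omega G2 \<and>
     omega G1 + omega G2 = omega (NNS_join G1 G2) \<and>
     chi (NS_join G1 G2) = chi G1 + chi G2 \<and>
     chi G1 + chi G2 = chi (NNS_join G1 G2) \<and>
     theta (NS_join G1 G2) \<ge> real (card (verts G1)) + theta G2 \<and>
     theta (NNS_join G1 G2) \<ge> real (card (verts G1)) + theta G2 \<and>
     ((\<exists>\<pi>. bij_betw \<pi> (verts G1) (verts G1) \<and> (\<forall>v\<in>verts G1. {v, \<pi> v} \<in> edges G1)) \<longrightarrow>
        theta (NS_join G1 G2) = real (card (verts G1)) + theta G2) \<and>
     ((\<exists>\<pi>. bij_betw \<pi> (verts G1) (verts G1) \<and>
           (\<forall>v\<in>verts G1. \<pi> v \<noteq> v \<and> {v, \<pi> v} \<notin> edges G1)) \<longrightarrow>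
        theta (NNS_join G1 G2) = real (card (verts G1)) + theta G2) \<and>
     ((\<exists>\<pi>. bij_betw \<pi> (verts G1) (verts G1) \<and> (\<forall>v\<in>verts G1. {v, \<pi> v} \<in> edges G1)) \<and>
        real (alpha G2) = theta G2 \<longrightarrow>
        alpha (NS_join G1 G2) = card (verts G1) + alpha G2) \<and>
     ((\<exists>\<pi>. bij_betw \<pi> (verts G1) (verts G1) \<and>
           (\<forall>v\<in>verts G1. \<pi> v \<noteq> v \<and> {v, \<pi> v} \<notin> edges G1)) \<and>
        real (alpha G2) = theta G2 \<longrightarrow>
        alpha (NNS_join G1 G2) = card (verts G1) + alpha G2)"
proof -
  note G1 = assms(1) and G2 = assms(2) and ne = assms(3)
  have f1: "finite (verts G1)" and f2: "finite (verts G2)" using G1 G2 unfolding finite_simple_graph_def by auto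
  obtain w0 where w0: "w0 \<in> verts G2" using ne by blast
  note NSh = verts_NS[of G1 G2] EH_NS[OF G1 G2] RS_S[of G1 G2]
  note NNSh = verts_NNS[of G1 G2] EH_NNS[OF G1 G2] RS_NNS[of G1 G2]
  have fNS: "finite (verts (NS_join G1 G2))" using f1 f2 by (simp add: verts_NS)
  have fNNS: "finite (verts (NNS_join G1 G2))" using f1 f2 by (simp add: verts_NNS)
  have vNS: "Inl (Inr w0) \<in> verts (NS_join G1 G2)" using w0 by (simp add: verts_NS)
  have vNNS: "Inl (Inr w0) \<in> verts (NNS_join G1 G2)" using w0 by (simp add: verts_NNS)
  have a1: "card (verts G1) + alpha G2 \<le> alpha (NS_join G1 G2)"
    by (rule H_alpha_ge[OF G1 G2 NSh])
  have a2: "card (verts G1) + alpha G2 \<le> alpha (NNS_join G1 G2)"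
    by (rule H_alpha_ge[OF G1 G2 NNSh])
  have o1: "omega (NS_join G1 G2) = omega G1 + omega G2"
    by (rule H_omega[OF G1 G2 NSh ne])
  have o2: "omega (NNS_join G1 G2) = omega G1 + omega G2"
    by (rule H_omega[OF G1 G2 NNSh ne])
  have c1: "chi (NS_join G1 G2) = chi G1 + chi G2"
    using chi_NS_le[OF G1 G2] H_chi_ge[OF G1 G2 NSh] by simp
  have c2: "chi (NNS_join G1 G2) = chi G1 + chi G2"
    using chi_NNS_le[OF G1 G2 ne] H_chi_ge[OF G1 G2 NNSh] by simp
  have t1: "real (card (verts G1)) + theta G2 \<le> theta (NS_join G1 G2)"
    by (rule H_theta_lower[OF G1 G2 NSh ne])
  have t2: "real (card (verts G1)) + theta G2 \<le> theta (NNS_join G1 G2)"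
    by (rule H_theta_lower[OF G1 G2 NNSh ne])
  have i: "theta (NS_join G1 G2) = real (card (verts G1)) + theta G2"
    if pre: "\<exists>\<pi>. bij_betw \<pi> (verts G1) (verts G1) \<and> (\<forall>v\<in>verts G1. {v, \<pi> v} \<in> edges G1)"
  proof -
    obtain \<pi> where pi: "bij_betw \<pi> (verts G1) (verts G1)" "\<forall>v\<in>verts G1. {v, \<pi> v} \<in> edges G1"
      using pre by blast
    have M: "\<forall>v\<in>verts G1. {Inl (Inl (\<pi> v)), Inr v} \<in> edges (NS_join G1 G2)"
    proof
      fix v assume v: "v \<in> verts G1"
      have "\<pi> v \<in> verts G1" using pi(1) v bij_betwE by blast
      then have "adjS G1 G2 (Inl (Inl (\<pi> v))) (Inr v)" unfolding adjS_def using v pi(2) by blast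
      then show "{Inl (Inl (\<pi> v)), Inr v} \<in> edges (NS_join G1 G2)" using NSh(2) by blast
    qed
    show ?thesis using H_theta_upper[OF G1 G2 NSh ne pi(1) M] t1 by simp
  qed
  have ii: "theta (NNS_join G1 G2) = real (card (verts G1)) + theta G2"
    if pre: "\<exists>\<pi>. bij_betw \<pi> (verts G1) (verts G1) \<and> (\<forall>v\<in>verts G1. \<pi> v \<noteq> v \<and> {v, \<pi> v} \<notin> edges G1)"
  proof -
    obtain \<pi> where pi: "bij_betw \<pi> (verts G1) (verts G1)" "\<forall>v\<in>verts G1. \<pi> v \<noteq> v \<and> {v, \<pi> v} \<notin> edges G1"
      using pre by blast
    have M: "\<forall>v\<in>verts G1. {Inl (Inl (\<pi> v)), Inr v} \<in> edges (NNS_join G1 G2)"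
    proof
      fix v assume v: "v \<in> verts G1"
      have "\<pi> v \<in> verts G1" using pi(1) v bij_betwE by blast
      then have "adjNNS G1 G2 (Inl (Inl (\<pi> v))) (Inr v)" unfolding adjNNS_def using v pi(2) by metis
      then show "{Inl (Inl (\<pi> v)), Inr v} \<in> edges (NNS_join G1 G2)" using NNSh(2) by blast
    qed
    show ?thesis using H_theta_upper[OF G1 G2 NNSh ne pi(1) M] t2 by simp
  qed
  have aNS: "real (alpha (NS_join G1 G2)) \<le> theta (NS_join G1 G2)"
    by (rule alpha_le_theta[OF fNS vNS H_noloop[OF G1 G2 NSh(2,3)]])
  have aNNS: "real (alpha (NNS_join G1 G2)) \<le> theta (NNS_join G1 G2)"
    by (rule alpha_le_theta[OF fNNS vNNS H_noloop[OF G1 G2 NNSh(2,3)]])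
  have iii: "alpha (NS_join G1 G2) = card (verts G1) + alpha G2"
    if pre: "(\<exists>\<pi>. bij_betw \<pi> (verts G1) (verts G1) \<and> (\<forall>v\<in>verts G1. {v, \<pi> v} \<in> edges G1)) \<and>
        real (alpha G2) = theta G2"
  proof -
    have "real (alpha (NS_join G1 G2)) \<le> real (card (verts G1)) + real (alpha G2)"
      using aNS i pre by simp
    then have "alpha (NS_join G1 G2) \<le> card (verts G1) + alpha G2" by linarith
    then show ?thesis using a1 by simp
  qed
  have iv: "alpha (NNS_join G1 G2) = card (verts G1) + alpha G2"
    if pre: "(\<exists>\<pi>. bij_betw \<pi> (verts G1) (verts G1) \<and>
           (\<forall>v\<in>verts G1. \<pi> v \<noteq> v \<and> {v, \<pi> v} \<notin> edges G1)) \<and>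
        real (alpha G2) = theta G2"
  proof -
    have "real (alpha (NNS_join G1 G2)) \<le> real (card (verts G1)) + real (alpha G2)"
      using aNNS ii pre by simp
    then have "alpha (NNS_join G1 G2) \<le> card (verts G1) + alpha G2" by linarith
    then show ?thesis using a2 by simp
  qed
  show ?thesis using a1 a2 o1 o2 c1 c2 t1 t2 i ii iii iv by simp
qed

end
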